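(* Consider the system $\dot x=f(x)$, $y=h(x)$ with $x\in\mathbb{R}^n$, $y\in\mathbb{R}^p$, satisfying assumptions (A.1)–(A.3) below, and assume it is forward complete. Let $V$ be a SIoGAS-Lyapunov function for this system which satisfies $$DV(x)f(x)\le -k_1V(x)^\mu-k_2V(x)^\nu\quad\text{for all }x\in\mathbb{R}^n\setminus\mathcal{Y}$$ for some $k_1,k_2>0$, $\mu\in(0,1)$, $\nu>1$. Then the system is SIoGAS and output fixed-time stable (OFxTS), and the settling-time function satisfies $T(x_0)\le\frac{1}{k_1(1-\mu)}+\frac{1}{k_2(\nu-1)}$ for all $x_0\in\mathbb{R}^n$.
   Context: Standing assumptions: (A.1) $f:\mathbb{R}^n\to\mathbb{R}^n$ ensures forward existence and uniqueness of solutions (in the Filippov sense) at least locally in time, and $f(0)=0$; (A.2) $h:\mathbb{R}^n\to\mathbb{R}^p$ is continuously differentiable with $h(0)=0$; (A.3) $f$ is locally Lipschitz on $\mathbb{R}^n\setminus\mathcal{Y}$, where $\mathcal{Y}=\{x: h(x)=0\}$. $\Phi(t,x_0)$ denotes the unique maximal solution on $[0,T_s(x_0))$ and $Y(t,x_0)=h(\Phi(t,x_0))$. Forward complete: $T_s(x_0)=+\infty$ for all $x_0$. $\mathcal{K}$, $\mathcal{K}_\infty$, $\mathcal{KL}$ are the standard comparison function classes. $DV(x)f(x)$ denotes the derivative of $V$ along $f$. The system is SIoGAS if it is forward complete and there is $\beta\in\mathcal{KL}$ with $|Y(t,x_0)|\le\beta(|h(x_0)|,t)$ for all $t\ge0$,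 $x_0$. A smooth $V$ is a SIoGAS-Lyapunov function if there exist $\xi_1,\xi_2\in\mathcal{K}_\infty$ with $\xi_1(|h(x)|)\le V(x)\le\xi_2(|h(x)|)$ for all $x$ and $\xi_3\in\mathcal{K}$ with $DV(x)f(x)\le-\xi_3(V(x))$ on $\mathbb{R}^n\setminus\mathcal{Y}$. The system is oGAS if it is forward complete and there is $\beta\in\mathcal{KL}$ with $|Y(t,x_0)|\le\beta(|x_0|,t)$ for all $t\ge 0$, $x_0$. It is output finite-time stable (OFTS) if it is oGAS and for every $x_0$ there is a finite $T_0\ge0$ with $Y(t,x_0)=0$ for all $t>T_0$; the settling-time function is $T(x_0)=\inf\{T_0\ge0: Y(t,x_0)=0\ \forall t\ge T_0\}$. It is OFxTS if it is OFTS and $\sup_{x_0\in\mathbb{R}^n}T(x_0)<\infty$. *)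

theory Defs
  imports "HOL-Analysis.Analysis"
begin

definition class_K :: "(real \<Rightarrow> real) \<Rightarrow> bool" where
  "class_K \<alpha> \<longleftrightarrow> continuous_on {0..} \<alpha> \<and> \<alpha> 0 = 0 \<and> strict_mono_on {0..} \<alpha>"

definition class_Kinf :: "(real \<Rightarrow> real) \<Rightarrow> bool" where
  "class_Kinf \<alpha> \<longleftrightarrow> class_K \<alpha> \<and> filterlim \<alpha> at_top at_top"

definition class_KL :: "(real \<Rightarrow> real \<Rightarrow> real) \<Rightarrow> bool" where
  "class_KL \<beta> \<longleftrightarrow>
     continuous_on ({0..} \<times> {0..}) (\<lambda>(r, t). \<beta> r t) \<and>
     (\<forall>t\<ge>0. class_K (\<lambda>r. \<beta> r t)) \<and>
     (\<forall>r\<ge>0. antimono_on {0..} (\<beta> r) \<and> ((\<beta> r) \<longlongrightarrow> 0) at_top)"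

definition C1_map :: "('a::real_normed_vector \<Rightarrow> 'b::real_normed_vector) \<Rightarrow> bool" where
  "C1_map F \<longleftrightarrow> (\<exists>DF :: 'a \<Rightarrow> ('a \<Rightarrow>\<^sub>L 'b).
      continuous_on UNIV DF \<and> (\<forall>x. (F has_derivative blinfun_apply (DF x)) (at x)))"

definition lie_deriv :: "('a::real_normed_vector \<Rightarrow> real) \<Rightarrow> ('a \<Rightarrow> 'a) \<Rightarrow> 'a \<Rightarrow> real" where
  "lie_deriv V f x = frechet_derivative V (at x) (f x)"

definition filippov_set :: "('a::euclidean_space \<Rightarrow> 'a) \<Rightarrow> 'a \<Rightarrow> 'a set" where
  "filippov_set f x =
     (\<Inter>\<delta>\<in>{0<..}. \<Inter>N\<in>null_sets lborel. closure (convex hull (f ` (ball x \<delta> - N))))"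

text \<open>z is a Filippov solution of x' = f(x) on the interval I (containing 0) with z(0) = x0:
  z is absolutely continuous on compact subintervals, i.e. an indefinite Lebesgue integral,
  and its derivative lies in the Filippov set almost everywhere.\<close>
definition filippov_solution ::
    "('a::euclidean_space \<Rightarrow> 'a) \<Rightarrow> 'a \<Rightarrow> real set \<Rightarrow> (real \<Rightarrow> 'a) \<Rightarrow> bool" where
  "filippov_solution f x0 I z \<longleftrightarrow>
     z 0 = x0 \<and>
     (\<exists>g. (\<forall>t\<in>I. g absolutely_integrable_on {0..t} \<and> (g has_integral (z t - x0)) {0..t}) \<and>
          (AE t in lborel. t \<in> I \<longrightarrow> g t \<in> filippov_set f (z t)))"

section \<open>Output stability notions (forward completeness is built into \<Phi> being defined on [0,\<infinity>))\<close>

definition SIoGAS :: "('n \<Rightarrow> 'p::real_normed_vector) \<Rightarrow> (real \<Rightarrow> 'n \<Rightarrow> 'n) \<Rightarrow> bool" where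
  "SIoGAS h \<Phi> \<longleftrightarrow> (\<exists>\<beta>. class_KL \<beta> \<and>
      (\<forall>t\<ge>0. \<forall>x0. norm (h (\<Phi> t x0)) \<le> \<beta> (norm (h x0)) t))"

definition SIoGAS_Lyapunov ::
    "('n::real_normed_vector \<Rightarrow> 'n) \<Rightarrow> ('n \<Rightarrow> 'p::real_normed_vector) \<Rightarrow> ('n \<Rightarrow> real) \<Rightarrow> bool" where
  "SIoGAS_Lyapunov f h V \<longleftrightarrow> C1_map V \<and>
     (\<exists>\<xi>1 \<xi>2 \<xi>3. class_Kinf \<xi>1 \<and> class_Kinf \<xi>2 \<and> class_K \<xi>3 \<and>
        (\<forall>x. \<xi>1 (norm (h x)) \<le> V x \<and> V x \<le> \<xi>2 (norm (h x))) \<and>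
        (\<forall>x. h x \<noteq> 0 \<longrightarrow> lie_deriv V f x \<le> - \<xi>3 (V x)))"

definition oGAS :: "('n::real_normed_vector \<Rightarrow> 'p::real_normed_vector) \<Rightarrow> (real \<Rightarrow> 'n \<Rightarrow> 'n) \<Rightarrow> bool" where
  "oGAS h \<Phi> \<longleftrightarrow> (\<exists>\<beta>. class_KL \<beta> \<and>
      (\<forall>t\<ge>0. \<forall>x0. norm (h (\<Phi> t x0)) \<le> \<beta> (norm x0) t))"

definition OFTS :: "('n::real_normed_vector \<Rightarrow> 'p::real_normed_vector) \<Rightarrow> (real \<Rightarrow> 'n \<Rightarrow> 'n) \<Rightarrow> bool" where
  "OFTS h \<Phi> \<longleftrightarrow> oGAS h \<Phi> \<and> (\<forall>x0. \<exists>T0\<ge>0. \<forall>t>T0. h (\<Phi> t x0) = 0)"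

definition settling_time :: "('n \<Rightarrow> 'p::zero) \<Rightarrow> (real \<Rightarrow> 'n \<Rightarrow> 'n) \<Rightarrow> 'n \<Rightarrow> real" where
  "settling_time h \<Phi> x0 = Inf {T0. T0 \<ge> 0 \<and> (\<forall>t\<ge>T0. h (\<Phi> t x0) = 0)}"

definition OFxTS :: "('n::real_normed_vector \<Rightarrow> 'p::real_normed_vector) \<Rightarrow> (real \<Rightarrow> 'n \<Rightarrow> 'n) \<Rightarrow> bool" where
  "OFxTS h \<Phi> \<longleftrightarrow> OFTS h \<Phi> \<and> bdd_above (range (settling_time h \<Phi>))"

end

theory Submission
  imports Defs "HOL-Real_Asymp.Real_Asymp"
begin


lemma filippov_subset:
  fixes f :: "'a::euclidean_space \<Rightarrow> 'a"
  assumes "isCont f x"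
  shows "filippov_set f x \<subseteq> {f x}"
proof
  fix v assume v: "v \<in> filippov_set f x"
  have "dist v (f x) \<le> e" if e: "e > 0" for e
  proof -
    obtain d where d: "d > 0" "\<And>y. dist y x < d \<Longrightarrow> dist (f y) (f x) < e"
      using assms e unfolding continuous_at_eps_delta by blast
    have "v \<in> closure (convex hull (f ` (ball x d - {})))"
      using v d(1) unfolding filippov_set_def by blast
    moreover have "f ` (ball x d - {}) \<subseteq> ball (f x) e"
      using d by (auto simp: dist_commute)
    then have "convex hull (f ` (ball x d - {})) \<subseteq> ball (f x) e"
      by (simp add: convex_hull_subset convex_ball hull_minimal)
    then have "closure (convex hull (f ` (ball x d - {}))) \<subseteq> cball (f x) e"
      using closure_mono closure_ball_lemma by (metis closed_cball ball_subset_cball closure_minimal order_trans)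
    ultimately show ?thesis by (auto simp: dist_commute)
  qed
  then have "dist v (f x) = 0"
  proof -
    assume H: "\<And>e. e > 0 \<Longrightarrow> dist v (f x) \<le> e"
    show ?thesis
    proof (rule ccontr)
      assume "dist v (f x) \<noteq> 0"
      then have "dist v (f x) > 0" by simp
      from H[of "dist v (f x) / 2"] this show False by simp
    qed
  qed
  then show "v \<in> {f x}" by simp
qed



lemma sol_cont:
  assumes sol: "filippov_solution f x0 {0..} z"
  shows "continuous_on {0..T} z"
proof -
  from sol obtain g where z0: "z 0 = x0" and
    G1: "\<forall>t\<in>{0..}. g absolutely_integrable_on {0..t} \<and> (g has_integral (z t - x0)) {0..t}"
    unfolding filippov_solution_def by blast
  show ?thesis
  proof (cases "T \<ge> 0")
    case True
    have "g integrable_on {0..T}" using G1 True by (meson atLeast_iff has_integral_integrable)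
    then have "continuous_on {0..T} (\<lambda>s. x0 + integral {0..s} g)"
      by (intro continuous_intros indefinite_integral_continuous_1)
    moreover have "\<And>s. s \<in> {0..T} \<Longrightarrow> x0 + integral {0..s} g = z s"
      using G1 by (metis atLeastAtMost_iff atLeast_iff diff_add_cancel add.commute integral_unique)
    ultimately show ?thesis using continuous_on_eq by blast
  next
    case False then show ?thesis by simp
  qed
qed

lemma sol_cont_at:
  assumes sol: "filippov_solution f x0 {0..} z" and "t > 0"
  shows "isCont z t"
proof -
  have "continuous_on {0..t+1} z" by (rule sol_cont[OF sol])
  moreover have "t \<in> interior {0..t+1}" using assms(2) by simp
  ultimately show ?thesis using continuous_on_interior by blast
qed

lemma sol_deriv:
  fixes f :: "'a::euclidean_space \<Rightarrow> 'a"
  assumes sol: "filippov_solution f x0 {0..} z"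
    and t: "t > 0"
    and lip: "\<exists>e>0. \<exists>L. L-lipschitz_on (ball (z t) e) f"
  shows "(z has_vector_derivative f (z t)) (at t)"
proof -
  from sol obtain g where z0: "z 0 = x0" and
    G1: "\<forall>t\<in>{0..}. g absolutely_integrable_on {0..t} \<and> (g has_integral (z t - x0)) {0..t}" and
    G2: "AE s in lborel. s \<in> {0..} \<longrightarrow> g s \<in> filippov_set f (z s)"
    unfolding filippov_solution_def by blast
  have zint: "z s = x0 + integral {0..s} g" if "s \<ge> 0" for s
    using G1 that by (metis atLeast_iff diff_add_cancel add.commute integral_unique)
  from lip obtain e L where e: "e > 0" and L: "L-lipschitz_on (ball (z t) e) f" by blast
  have fc: "continuous_on (ball (z t) e) f" using L by (rule lipschitz_on_continuous_on)
  have zc: "isCont z t" by (rule sol_cont_at[OF sol t])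
  then obtain d where d: "d > 0" "\<And>s. dist s t < d \<Longrightarrow> dist (z s) (z t) < e"
    using e unfolding continuous_at_eps_delta by blast
  define a where "a = t - min d t / 2"
  define b where "b = t + min d t / 2"
  have ab: "0 < a" "a < t" "t < b" using d t by (auto simp: a_def b_def)
  have zin: "z s \<in> ball (z t) e" if "s \<in> {a..b}" for s
    using that d(2)[of s] d(1) t by (auto simp: a_def b_def dist_real_def dist_commute)
  have fz_cont: "continuous_on {a..b} (f \<circ> z)"
  proof (rule continuous_on_compose)
    show "continuous_on {a..b} z" using sol_cont[OF sol, of b] continuous_on_subset ab by fastforce
    show "continuous_on (z ` {a..b}) f" using fc zin continuous_on_subset by blast
  qed
  obtain N where N0: "{s \<in> space lborel. \<not> (s \<in> {0..} \<longrightarrow> g s \<in> filippov_set f (z s))} \<subseteq> N"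
    "emeasure lborel N = 0" "N \<in> sets lborel"
    using G2 by (rule AE_E)
  have N: "N \<in> null_sets lborel" "{s. \<not> (s \<in> {0..} \<longrightarrow> g s \<in> filippov_set f (z s))} \<subseteq> N"
    using N0 by (auto intro: null_setsI)
  have negN: "negligible N"
    using N(1) by (simp add: negligible_iff_null_sets null_sets_completionI)
  have geq: "g s = f (z s)" if "s \<in> {a..b} - N" for s
  proof -
    have "s \<ge> 0" "s \<notin> N" using that ab by auto
    then have "g s \<in> filippov_set f (z s)" using N(2) by blast
    moreover have "isCont f (z s)"
      using fc zin[of s] that by (simp add: continuous_on_eq_continuous_at)
    ultimately show ?thesis using filippov_subset by blast
  qed
  have int_g: "g integrable_on {0..b}" using G1 ab by (meson atLeast_iff has_integral_integrable less_le_not_le less_trans)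
  have zeq: "z s = z a + integral {a..s} (f \<circ> z)" if s: "s \<in> {a..b}" for s
  proof -
    have zs: "z s = x0 + integral {0..s} g" and za: "z a = x0 + integral {0..a} g"
      using zint s ab by auto
    have gs: "g integrable_on {0..s}" using int_g s ab
      by (meson atLeastAtMost_iff atLeastatMost_subset_iff integrable_on_subinterval order.refl)
    have "integral {0..a} g + integral {a..s} g = integral {0..s} g"
      using Henstock_Kurzweil_Integration.integral_combine[OF _ _ gs] ab s by auto
    moreover have "integral {a..s} g = integral {a..s} (f \<circ> z)"
      by (rule integral_spike[OF negN]) (use geq s in auto)
    ultimately show ?thesis using zs za by (simp add: algebra_simps)
  qed
  have "((\<lambda>u. integral {a..u} (f \<circ> z)) has_vector_derivative (f \<circ> z) t) (at t within {a..b})"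
    by (rule integral_has_vector_derivative[OF fz_cont]) (use ab in auto)
  then have "((\<lambda>u. integral {a..u} (f \<circ> z)) has_vector_derivative (f \<circ> z) t) (at t)"
  proof -
    have "t \<in> interior {a..b}" using ab by simp
    then have "at t within {a..b} = at t" by (rule at_within_interior)
    then show ?thesis using \<open>((\<lambda>u. integral {a..u} (f \<circ> z)) has_vector_derivative (f \<circ> z) t) (at t within {a..b})\<close> by simp
  qed
  then have "((\<lambda>u. z a + integral {a..u} (f \<circ> z)) has_vector_derivative f (z t)) (at t)"
    by (auto intro!: derivative_eq_intros)
  note D = this
  have tin: "t \<in> {a<..<b}" using ab by simp
  have eqz: "z a + integral {a..y} (f \<circ> z) = z y" if "y \<in> {a<..<b}" for y
    using zeq[of y] that by simp
  show ?thesis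
    by (rule has_vector_derivative_transform_within_open[OF D open_greaterThanLessThan tin eqz])
qed

lemma lyap_deriv:
  fixes f :: "'a::euclidean_space \<Rightarrow> 'a" and V :: "'a \<Rightarrow> real"
  assumes sol: "filippov_solution f x0 {0..} z"
    and t: "t > 0"
    and lip: "\<exists>e>0. \<exists>L. L-lipschitz_on (ball (z t) e) f"
    and Vd: "V differentiable (at (z t))"
  shows "((\<lambda>s. V (z s)) has_real_derivative lie_deriv V f (z t)) (at t)"
proof -
  let ?D = "frechet_derivative V (at (z t))"
  have zd: "(z has_derivative (\<lambda>u. u *\<^sub>R f (z t))) (at t)"
    using sol_deriv[OF sol t lip] by (simp add: has_vector_derivative_def)
  have Vd': "(V has_derivative ?D) (at (z t))" using Vd frechet_derivative_works by blast
  have "((V \<circ> z) has_derivative (?D \<circ> (\<lambda>u. u *\<^sub>R f (z t)))) (at t)"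
    by (rule diff_chain_at[OF zd Vd'])
  moreover have "?D \<circ> (\<lambda>u. u *\<^sub>R f (z t)) = (\<lambda>u. u *\<^sub>R ?D (f (z t)))"
    using has_derivative_linear[OF Vd'] by (auto simp: linear_scale)
  ultimately have "((V \<circ> z) has_vector_derivative ?D (f (z t))) (at t)"
    by (simp add: has_vector_derivative_def)
  then show ?thesis
    by (simp add: has_real_derivative_iff_has_vector_derivative lie_deriv_def o_def)
qed



lemma W_mono:
  fixes W :: "real \<Rightarrow> real"
  assumes cont: "continuous_on {0..} W"
    and nonneg: "\<And>t. t \<ge> 0 \<Longrightarrow> W t \<ge> 0"
    and der: "\<And>t. t > 0 \<Longrightarrow> W t > 0 \<Longrightarrow> \<exists>D. (W has_real_derivative D) (at t) \<and> D < 0"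
    and st: "0 \<le> s" "s \<le> t"
  shows "W t \<le> W s"
proof (rule ccontr)
  assume "\<not> W t \<le> W s"
  then have lt: "W s < W t" by simp
  define S where "S = {s..t} \<inter> W -` {..W s}"
  have cst: "continuous_on {s..t} W" using cont st continuous_on_subset by fastforce
  have "closed S" unfolding S_def by (intro continuous_closed_preimage cst) auto
  moreover have "s \<in> S" using st by (auto simp: S_def)
  moreover have "bdd_above S" unfolding S_def by (auto intro: bdd_aboveI[of _ t])
  ultimately have cS: "Sup S \<in> S" using closed_contains_Sup by blast
  define c where "c = Sup S"
  have cge: "s \<le> c" using \<open>s \<in> S\<close> \<open>bdd_above S\<close> by (auto simp: c_def intro: cSup_upper)
  have "c \<le> t" "W c \<le> W s" using cS by (auto simp: S_def c_def)
  then have ct: "c < t" using lt by (cases "c = t") auto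
  have pos: "W x > W s" if "c < x" "x \<le> t" for x
  proof (rule ccontr)
    assume "\<not> W s < W x"
    then have "x \<in> S" using that cge st by (auto simp: S_def)
    then have "x \<le> c" using \<open>bdd_above S\<close> by (auto simp: c_def intro: cSup_upper)
    then show False using that by simp
  qed
  have "continuous_on {c..t} W" using cst cge continuous_on_subset by fastforce
  moreover have "W differentiable (at x)" if "c < x" "x < t" for x
  proof -
    have "W x > 0" using pos[of x] that nonneg[of s] st by auto
    moreover have "x > 0" using that cge st by auto
    ultimately show ?thesis using der[of x] real_differentiable_def by blast
  qed
  ultimately obtain l x where x: "c < x" "x < t" "(W has_real_derivative l) (at x)" "W t - W c = (t - c) * l"
    using MVT[OF ct] by blast
  have "W x > 0" using pos[of x] x nonneg[of s] st by auto
  moreover have "x > 0" using x cge st by auto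
  ultimately obtain D where D: "(W has_real_derivative D) (at x)" "D < 0" using der by blast
  have "l = D" using DERIV_unique x(3) D(1) by blast
  then have "W t - W c < 0" using x(4) ct D(2) by (simp add: mult_pos_neg)
  then show False using \<open>W c \<le> W s\<close> lt by simp
qed

lemma W_mono_decay:
  fixes W :: "real \<Rightarrow> real" and k1 k2 \<mu> \<nu> :: real
  assumes cont: "continuous_on {0..} W"
    and nonneg: "\<And>t. t \<ge> 0 \<Longrightarrow> W t \<ge> 0"
    and der: "\<And>t. t > 0 \<Longrightarrow> W t > 0 \<Longrightarrow> \<exists>D. (W has_real_derivative D) (at t) \<and> D \<le> - k1 * W t powr \<mu> - k2 * W t powr \<nu>"
    and k1: "k1 > 0" and k2: "k2 > 0"
    and st: "0 \<le> s" "s \<le> t"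
  shows "W t \<le> W s"
proof -
  have der': "\<exists>D. (W has_real_derivative D) (at x) \<and> D < 0" if xp: "x > 0" "W x > 0" for x
  proof -
    obtain D where "(W has_real_derivative D) (at x)" "D \<le> - k1 * W x powr \<mu> - k2 * W x powr \<nu>"
      using der[OF xp] by blast
    moreover have "k1 * W x powr \<mu> > 0" "k2 * W x powr \<nu> > 0" using k1 k2 xp by auto
    ultimately show ?thesis by (intro exI[of _ D]) auto
  qed
  show ?thesis by (rule W_mono[OF cont nonneg der' st]) auto
qed

lemma W_finite:
  fixes W :: "real \<Rightarrow> real" and k1 k2 \<mu> \<nu> :: real
  assumes cont: "continuous_on {0..} W"
    and nonneg: "\<And>t. t \<ge> 0 \<Longrightarrow> W t \<ge> 0"
    and der: "\<And>t. t > 0 \<Longrightarrow> W t > 0 \<Longrightarrow> \<exists>D. (W has_real_derivative D) (at t) \<and> D \<le> - k1 * W t powr \<mu> - k2 * W t powr \<nu>"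
    and k1: "k1 > 0" and k2: "k2 > 0" and mu: "0 < \<mu>" "\<mu> < 1" and nu: "\<nu> > 1"
    and tT: "t \<ge> 1 / (k1 * (1 - \<mu>)) + 1 / (k2 * (\<nu> - 1))"
  shows "W t = 0"
proof -
  define T1 where "T1 = 1 / (k2 * (\<nu> - 1))"
  define T2 where "T2 = 1 / (k1 * (1 - \<mu>))"
  have T1: "T1 > 0" "T1 * (k2 * (\<nu> - 1)) = 1" using k2 nu by (auto simp: T1_def)
  have T2: "T2 > 0" "T2 * (k1 * (1 - \<mu>)) = 1" using k1 mu by (auto simp: T2_def)
  have der': "\<exists>D. (W has_real_derivative D) (at x) \<and> D < 0" if xp: "x > 0" "W x > 0" for x
  proof -
    obtain D where "(W has_real_derivative D) (at x)" "D \<le> - k1 * W x powr \<mu> - k2 * W x powr \<nu>"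
      using der[OF xp] by blast
    moreover have "k1 * W x powr \<mu> > 0" "k2 * W x powr \<nu> > 0" using k1 k2 xp by auto
    ultimately show ?thesis by (intro exI[of _ D]) auto
  qed
  have mono: "W b \<le> W a" if "0 \<le> a" "a \<le> b" for a b
    by (rule W_mono[OF cont nonneg der' that]) auto
  have A: "W T1 \<le> 1"
  proof (rule ccontr)
    assume "\<not> W T1 \<le> 1"
    then have W1: "W T1 > 1" by simp
    have Wpos: "W x > 1" if "0 \<le> x" "x \<le> T1" for x using mono[OF that] W1 by simp
    define P where "P x = W x powr (1 - \<nu>)" for x
    have "continuous_on {0..T1} W" using cont continuous_on_subset by fastforce
    moreover have "\<forall>x\<in>{0..T1}. W x \<noteq> 0" using Wpos by force
    ultimately have cP: "continuous_on {0..T1} P" unfolding P_def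
      using continuous_on_powr[OF _ continuous_on_const] by blast
    have dP: "(P has_real_derivative (1 - \<nu>) * W x powr (1 - \<nu> - 1) * D) (at x)"
      if "(W has_real_derivative D) (at x)" "W x > 0" for x D
      using DERIV_fun_powr[OF that, of "1 - \<nu>"] unfolding P_def by (simp only: of_nat_1)
    have "P differentiable (at x)" if xp: "0 < x" "x < T1" for x
    proof -
      have "W x > 0" using Wpos[of x] xp by simp
      then obtain D where "(W has_real_derivative D) (at x)" using der[of x] xp by blast
      then have "(P has_real_derivative (1 - \<nu>) * W x powr (1 - \<nu> - 1) * D) (at x)"
        using dP \<open>W x > 0\<close> by blast
      then show ?thesis using real_differentiable_def by blast
    qed
    then obtain l x where x: "0 < x" "x < T1" "(P has_real_derivative l) (at x)" "P T1 - P 0 = (T1 - 0) * l"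
      using MVT[OF T1(1) cP] by blast
    have Wx: "W x > 1" using Wpos x by auto
    obtain D where D: "(W has_real_derivative D) (at x)" "D \<le> - k1 * W x powr \<mu> - k2 * W x powr \<nu>"
      using der[of x] Wx x by auto
    have Wx0: "W x > 0" using Wx by simp
    have l: "l = (1 - \<nu>) * W x powr (1 - \<nu> - 1) * D"
      by (rule DERIV_unique[OF x(3) dP[OF D(1) Wx0]])
    have "D \<le> - k2 * W x powr \<nu>" proof -
      have "k1 * W x powr \<mu> > 0" using k1 Wx0 by simp
      then show ?thesis using D(2) by linarith
    qed
    moreover have "(1 - \<nu>) * W x powr (1 - \<nu> - 1) < 0" using nu Wx by (simp add: mult_neg_pos)
    ultimately have "l \<ge> (1 - \<nu>) * W x powr (1 - \<nu> - 1) * (- k2 * W x powr \<nu>)"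
      unfolding l by (intro mult_left_mono_neg) auto
    also have "(1 - \<nu>) * W x powr (1 - \<nu> - 1) * (- k2 * W x powr \<nu>) = (\<nu> - 1) * k2 * (W x powr (- \<nu>) * W x powr \<nu>)"
      by (simp add: algebra_simps)
    also have "W x powr (- \<nu>) * W x powr \<nu> = 1" using Wx by (simp add: powr_add[symmetric])
    finally have "l \<ge> (\<nu> - 1) * k2" by simp
    then have "P T1 - P 0 \<ge> T1 * ((\<nu> - 1) * k2)" using x(4) T1(1) by (simp add: mult_left_mono)
    then have "P T1 \<ge> 1 + P 0" using T1(2) by (simp add: algebra_simps)
    moreover have "P 0 > 0" unfolding P_def using Wpos[of 0] T1 by simp
    moreover have "P T1 < 1" unfolding P_def using W1 nu by (simp add: powr_less_one)
    ultimately show False by simp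
  qed
  have B: "W (T1 + T2) = 0"
  proof (rule ccontr)
    assume "W (T1 + T2) \<noteq> 0"
    then have W0: "W (T1 + T2) > 0" using nonneg[of "T1 + T2"] T1 T2 by simp
    have Wpos: "W x > 0" if "T1 \<le> x" "x \<le> T1 + T2" for x using mono[OF _ that(2)] W0 that T1 by force
    define Q where "Q x = W x powr (1 - \<mu>)" for x
    have "continuous_on {T1..T1+T2} W" using cont continuous_on_subset T1 by fastforce
    moreover have "\<forall>x\<in>{T1..T1+T2}. W x \<noteq> 0" using Wpos by force
    ultimately have cQ: "continuous_on {T1..T1+T2} Q" unfolding Q_def
      using continuous_on_powr[OF _ continuous_on_const] by blast
    have dQ: "(Q has_real_derivative (1 - \<mu>) * W x powr (1 - \<mu> - 1) * D) (at x)"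
      if "(W has_real_derivative D) (at x)" "W x > 0" for x D
      using DERIV_fun_powr[OF that, of "1 - \<mu>"] unfolding Q_def by (simp only: of_nat_1)
    have "Q differentiable (at x)" if xp: "T1 < x" "x < T1 + T2" for x
    proof -
      have "W x > 0" using Wpos[of x] xp by simp
      moreover have "x > 0" using xp T1 by simp
      ultimately obtain D where "(W has_real_derivative D) (at x)" using der[of x] by blast
      then have "(Q has_real_derivative (1 - \<mu>) * W x powr (1 - \<mu> - 1) * D) (at x)"
        using dQ \<open>W x > 0\<close> by blast
      then show ?thesis using real_differentiable_def by blast
    qed
    moreover have "T1 < T1 + T2" using T2 by simp
    ultimately obtain l x where x: "T1 < x" "x < T1 + T2" "(Q has_real_derivative l) (at x)"
        "Q (T1 + T2) - Q T1 = (T1 + T2 - T1) * l"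
      using MVT[OF _ cQ] by blast
    have Wx: "W x > 0" using Wpos x by auto
    obtain D where D: "(W has_real_derivative D) (at x)" "D \<le> - k1 * W x powr \<mu> - k2 * W x powr \<nu>"
      using der[of x] Wx x T1 by auto
    have l: "l = (1 - \<mu>) * W x powr (1 - \<mu> - 1) * D"
      by (rule DERIV_unique[OF x(3) dQ[OF D(1) Wx]])
    have "D \<le> - k1 * W x powr \<mu>" proof -
      have "k2 * W x powr \<nu> > 0" using k2 Wx by simp
      then show ?thesis using D(2) by linarith
    qed
    moreover have "(1 - \<mu>) * W x powr (1 - \<mu> - 1) > 0" using mu Wx by simp
    ultimately have "l \<le> (1 - \<mu>) * W x powr (1 - \<mu> - 1) * (- k1 * W x powr \<mu>)"
      unfolding l by (intro mult_left_mono) auto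
    also have "(1 - \<mu>) * W x powr (1 - \<mu> - 1) * (- k1 * W x powr \<mu>) = - ((1 - \<mu>) * k1 * (W x powr (- \<mu>) * W x powr \<mu>))"
      by (simp add: algebra_simps)
    also have "W x powr (- \<mu>) * W x powr \<mu> = 1" using Wx by (simp add: powr_add[symmetric])
    finally have "l \<le> - ((1 - \<mu>) * k1)" by simp
    then have "T2 * l \<le> T2 * (- ((1 - \<mu>) * k1))" using T2(1) by (intro mult_left_mono) auto
    then have "Q (T1 + T2) - Q T1 \<le> T2 * (- ((1 - \<mu>) * k1))" using x(4) by simp
    then have "Q (T1 + T2) \<le> Q T1 - 1" using T2(2) by (simp add: algebra_simps)
    moreover have "Q T1 \<le> 1" unfolding Q_def using powr_mono2[of "1 - \<mu>" "W T1" 1] A Wpos[of T1] T2 mu by simp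
    moreover have "Q (T1 + T2) > 0" unfolding Q_def using W0 by simp
    ultimately show False by simp
  qed
  have "W t \<le> W (T1 + T2)" using mono[of "T1 + T2" t] tT T1 T2 by (simp add: T1_def T2_def add.commute)
  moreover have "t \<ge> 0" using tT T1 T2 unfolding T1_def T2_def by linarith
  ultimately show ?thesis using B nonneg[of t] by simp
qed



lemma classK_nonneg: "class_K a \<Longrightarrow> r \<ge> 0 \<Longrightarrow> a r \<ge> 0"
  unfolding class_K_def by (metis atLeast_iff order_refl strict_mono_on_leD)

lemma classK_mono: "class_K a \<Longrightarrow> 0 \<le> r \<Longrightarrow> r \<le> s \<Longrightarrow> a r \<le> a s"
  unfolding class_K_def by (meson atLeast_iff order_trans strict_mono_on_leD)

lemma classK_less: "class_K a \<Longrightarrow> 0 \<le> r \<Longrightarrow> 0 \<le> s \<Longrightarrow> a r < a s \<longleftrightarrow> r < s"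
  unfolding class_K_def using strict_mono_on_less[of "{0..}" a r s] by simp

lemma classK_zero_iff: "class_K a \<Longrightarrow> 0 \<le> r \<Longrightarrow> a r \<le> 0 \<longleftrightarrow> r = 0"
  using classK_less[of a 0 r] unfolding class_K_def by force

lemma classK_comp:
  assumes "class_K a" "class_K b"
  shows "class_K (\<lambda>r. a (b r))"
proof -
  have img: "b ` {0..} \<subseteq> {0..}" using classK_nonneg[OF assms(2)] by auto
  show ?thesis unfolding class_K_def
  proof (intro conjI)
    show "continuous_on {0..} (\<lambda>r. a (b r))"
      using assms img unfolding class_K_def using continuous_on_compose2[of "{0..}" a "{0..}" b] by blast
    show "a (b 0) = 0" using assms unfolding class_K_def by simp
    show "strict_mono_on {0..} (\<lambda>r. a (b r))"
    proof (rule strict_mono_onI)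
      fix r s :: real assume "r \<in> {0..}" "s \<in> {0..}" "r < s"
      then show "a (b r) < a (b s)"
        using assms classK_less[of b r s] classK_less[of a "b r" "b s"] classK_nonneg[OF assms(2)] by auto
    qed
  qed
qed

lemma classK_plus_id:
  assumes "class_K a" "continuous_on {0..} m" "m 0 = 0" "\<And>r s. 0 \<le> r \<Longrightarrow> r \<le> s \<Longrightarrow> m r \<le> m s"
    "\<And>r. 0 \<le> r \<Longrightarrow> m r \<ge> 0"
  shows "class_K (\<lambda>r. a (m r) + r)"
  unfolding class_K_def
proof (intro conjI)
  have img: "m ` {0..} \<subseteq> {0..}" using assms(5) by auto
  have "continuous_on {0..} (\<lambda>r. a (m r))"
    using assms img unfolding class_K_def using continuous_on_compose2[of "{0..}" a "{0..}" m] by blast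
  then show "continuous_on {0..} (\<lambda>r. a (m r) + r)" by (intro continuous_intros)
  show "a (m 0) + 0 = 0" using assms unfolding class_K_def by simp
  show "strict_mono_on {0..} (\<lambda>r. a (m r) + r)"
  proof (rule strict_mono_onI)
    fix r s :: real assume "r \<in> {0..}" "s \<in> {0..}" "r < s"
    then have "a (m r) \<le> a (m s)" using classK_mono[OF assms(1)] assms(4,5) by simp
    then show "a (m r) + r < a (m s) + s" using \<open>r < s\<close> by simp
  qed
qed

lemma classKL_prod:
  assumes K: "class_K K" and T: "T > 0"
  shows "class_KL (\<lambda>r t. K r * min 1 (exp (T - t)))"
  unfolding class_KL_def
proof (intro conjI allI impI)
  have cK: "continuous_on {0..} K" using K by (simp add: class_K_def)
  have "continuous_on ({0..} \<times> {0..}) (\<lambda>p. K (fst p))"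
    by (rule continuous_on_compose2[OF cK]) (auto intro: continuous_intros)
  moreover have "continuous_on ({0..} \<times> {0..}) (\<lambda>p::real\<times>real. min 1 (exp (T - snd p)))"
    by (intro continuous_intros)
  ultimately have "continuous_on ({0..} \<times> {0..}) (\<lambda>p. K (fst p) * min 1 (exp (T - snd p)))"
    by (intro continuous_intros)
  then show "continuous_on ({0..} \<times> {0..}) (\<lambda>(r, t). K r * min 1 (exp (T - t)))"
    by (simp add: case_prod_beta')
next
  fix t :: real assume "t \<ge> 0"
  have c: "min 1 (exp (T - t)) > 0" by simp
  show "class_K (\<lambda>r. K r * min 1 (exp (T - t)))"
    unfolding class_K_def
  proof (intro conjI)
    show "continuous_on {0..} (\<lambda>r. K r * min 1 (exp (T - t)))"
      using K by (auto simp: class_K_def intro!: continuous_intros)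
    show "K 0 * min 1 (exp (T - t)) = 0" using K by (simp add: class_K_def)
    show "strict_mono_on {0..} (\<lambda>r. K r * min 1 (exp (T - t)))"
      using K c by (auto simp: class_K_def strict_mono_on_def intro!: mult_strict_right_mono)
  qed
next
  fix r :: real assume r: "r \<ge> 0"
  have Kr: "K r \<ge> 0" using classK_nonneg[OF K r] .
  show "antimono_on {0..} (\<lambda>t. K r * min 1 (exp (T - t)))"
  proof (rule monotone_onI)
    fix s t :: real assume "s \<in> {0..}" "t \<in> {0..}" "s \<le> t"
    then have "min 1 (exp (T - t)) \<le> min 1 (exp (T - s))" by (auto simp: min_def)
    then show "K r * min 1 (exp (T - t)) \<le> K r * min 1 (exp (T - s))"
      using Kr by (intro mult_left_mono) auto
  qed
  have "((\<lambda>t. exp (T - t)) \<longlongrightarrow> 0) at_top" by real_asymp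
  then have "((\<lambda>t. min 1 (exp (T - t))) \<longlongrightarrow> min 1 0) at_top"
    by (intro tendsto_min tendsto_const)
  then have "((\<lambda>t. K r * min 1 (exp (T - t))) \<longlongrightarrow> K r * 0) at_top"
    by (intro tendsto_mult tendsto_const) simp
  then show "((\<lambda>t. K r * min 1 (exp (T - t))) \<longlongrightarrow> 0) at_top" by simp
qed



lemma classKinf_inv:
  assumes X: "class_Kinf \<xi>"
  obtains \<eta> where "class_K \<eta>" "\<And>u y. 0 \<le> u \<Longrightarrow> 0 \<le> y \<Longrightarrow> \<xi> u \<le> y \<Longrightarrow> u \<le> \<eta> y"
proof -
  have K: "class_K \<xi>" and lim: "filterlim \<xi> at_top at_top" using X by (auto simp: class_Kinf_def)
  have cK: "continuous_on {0..} \<xi>" and K0: "\<xi> 0 = 0" using K by (auto simp: class_K_def)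
  have big: "\<exists>R\<ge>0. \<xi> R \<ge> y" for y
  proof -
    have "eventually (\<lambda>x. \<xi> x \<ge> y) at_top" using lim by (simp add: filterlim_at_top)
    then obtain N where "\<And>x. x \<ge> N \<Longrightarrow> \<xi> x \<ge> y" by (auto simp: eventually_at_top_linorder)
    then show ?thesis by (intro exI[of _ "max N 0"]) auto
  qed
  have ex1: "\<exists>!u. 0 \<le> u \<and> \<xi> u = y" if y: "y \<ge> 0" for y
  proof -
    obtain R where R: "R \<ge> 0" "\<xi> R \<ge> y" using big by blast
    have "continuous_on {0..R} \<xi>" using cK continuous_on_subset by fastforce
    then obtain u where "0 \<le> u" "u \<le> R" "\<xi> u = y" using IVT'[of \<xi> 0 y R] K0 y R by auto
    moreover have "v = u" if "0 \<le> v" "\<xi> v = y" for v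
      using classK_less[OF K, of u v] classK_less[OF K, of v u] that \<open>0 \<le> u\<close> \<open>\<xi> u = y\<close> by force
    ultimately show ?thesis by blast
  qed
  define \<eta> where "\<eta> y = (THE u. 0 \<le> u \<and> \<xi> u = y)" for y
  have eta: "0 \<le> \<eta> y \<and> \<xi> (\<eta> y) = y" if "y \<ge> 0" for y
    unfolding \<eta>_def using theI'[OF ex1[OF that]] .
  have etaxi: "\<eta> (\<xi> u) = u" if "u \<ge> 0" for u
    unfolding \<eta>_def by (rule the1_equality[OF ex1]) (use classK_nonneg[OF K that] that in auto)
  have bound: "u \<le> \<eta> y" if "0 \<le> u" "0 \<le> y" "\<xi> u \<le> y" for u y
  proof (rule ccontr)
    assume "\<not> u \<le> \<eta> y"
    then have "\<xi> (\<eta> y) < \<xi> u" using classK_less[OF K, of "\<eta> y" u] eta[OF that(2)] that by auto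
    then show False using eta[OF that(2)] that by simp
  qed
  have cont: "continuous_on {0..} \<eta>"
    unfolding continuous_on_eq_continuous_within
  proof
    fix y0 :: real assume y0: "y0 \<in> {0..}"
    obtain R where R: "R \<ge> 0" "\<xi> R \<ge> y0 + 1" using big by blast
    have c1: "continuous_on (\<xi> ` {0..R}) \<eta>"
      by (rule continuous_on_inv) (use cK continuous_on_subset etaxi in \<open>fastforce+\<close>)
    have "{0..\<xi> R} \<subseteq> \<xi> ` {0..R}"
    proof
      fix y assume y: "y \<in> {0..\<xi> R}"
      then have "\<eta> y \<le> R" using bound[of "\<eta> y" "\<xi> R"] eta[of y] classK_less[OF K, of R "\<eta> y"] R by force
      then show "y \<in> \<xi> ` {0..R}" using eta[of y] y by (intro image_eqI[of _ _ "\<eta> y"]) auto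
    qed
    then have "continuous_on {0..\<xi> R} \<eta>" using c1 continuous_on_subset by blast
    then have "continuous (at y0 within {0..\<xi> R}) \<eta>"
      using y0 R by (simp add: continuous_on_eq_continuous_within)
    moreover have "at y0 within {0..} = at y0 within {0..\<xi> R}"
      by (rule at_within_nhd[of _ "{..<\<xi> R}"]) (use R in auto)
    ultimately show "continuous (at y0 within {0..}) \<eta>" by simp
  qed
  have "class_K \<eta>"
    unfolding class_K_def
  proof (intro conjI cont)
    show "\<eta> 0 = 0" using etaxi[of 0] K0 by simp
    show "strict_mono_on {0..} \<eta>"
    proof (rule strict_mono_onI)
      fix r s :: real assume "r \<in> {0..}" "s \<in> {0..}" "r < s"
      then show "\<eta> r < \<eta> s" using classK_less[OF K, of "\<eta> r" "\<eta> s"] eta[of r] eta[of s] by auto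
    qed
  qed
  then show ?thesis using that bound by blast
qed



lemma norm_bound_mono:
  fixes h :: "'a::euclidean_space \<Rightarrow> 'b::real_normed_vector"
  assumes hc: "continuous_on UNIV h" and h0: "h 0 = 0"
  obtains m where "continuous_on {0..} m" "m 0 = 0" "\<And>r s. 0 \<le> r \<Longrightarrow> r \<le> s \<Longrightarrow> m r \<le> m s"
    "\<And>r. 0 \<le> r \<Longrightarrow> m r \<ge> 0" "\<And>x. norm (h x) \<le> m (norm x)"
proof -
  define m where "m r = Sup ((\<lambda>x. norm (h x)) ` cball 0 r)" for r
  have bdd: "bdd_above ((\<lambda>x. norm (h x)) ` cball 0 r)" for r
  proof -
    have "compact ((\<lambda>x. norm (h x)) ` cball 0 r)"
      by (intro compact_continuous_image continuous_intros continuous_on_subset[OF hc]) auto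
    then show ?thesis by (simp add: bounded_imp_bdd_above compact_imp_bounded)
  qed
  have upper: "norm (h x) \<le> m r" if "norm x \<le> r" for x r
    unfolding m_def by (rule cSup_upper[OF _ bdd]) (use that in auto)
  have least: "m r \<le> c" if "0 \<le> r" "\<And>x. norm x \<le> r \<Longrightarrow> norm (h x) \<le> c" for r c
    unfolding m_def by (rule cSup_least) (use that in auto)
  have m0: "m 0 = 0" using least[of 0 0] upper[of 0 0] h0 by (simp add: h0)
  have mono: "m r \<le> m s" if "0 \<le> r" "r \<le> s" for r s
    using least[of r "m s"] upper[of _ s] that by force
  have nonneg: "m r \<ge> 0" if "0 \<le> r" for r using upper[of 0 r] h0 that by simp
  have key: "\<exists>d>0. \<forall>a b. 0 \<le> a \<longrightarrow> 0 \<le> b \<longrightarrow> a \<le> R \<longrightarrow> b \<le> R \<longrightarrow> \<bar>a - b\<bar> < d \<longrightarrow> m a \<le> m b + e"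
    if e: "e > 0" for R e
  proof -
    have "uniformly_continuous_on (cball 0 R) h"
      by (rule compact_uniformly_continuous[OF continuous_on_subset[OF hc]]) auto
    then obtain d where d: "d > 0" "\<And>x x'. x \<in> cball 0 R \<Longrightarrow> x' \<in> cball 0 R \<Longrightarrow> dist x' x < d \<Longrightarrow> dist (h x') (h x) < e"
      using e unfolding uniformly_continuous_on_def by metis
    show ?thesis
    proof (intro exI[of _ d] conjI allI impI d(1))
      fix a b :: real assume ab: "0 \<le> a" "0 \<le> b" "a \<le> R" "b \<le> R" "\<bar>a - b\<bar> < d"
      show "m a \<le> m b + e"
      proof (rule least)
        show "0 \<le> a" by fact
        fix x :: 'a assume x: "norm x \<le> a"
        define x' where "x' = (if norm x \<le> b then x else (b / norm x) *\<^sub>R x)"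
        have nx': "norm x' \<le> b"
        proof (cases "norm x \<le> b")
          case False
          then have "norm x > 0" using ab by auto
          then show ?thesis using False ab by (simp add: x'_def)
        qed (simp add: x'_def)
        have dx: "dist x' x < d"
        proof (cases "norm x \<le> b")
          case True then show ?thesis using d by (simp add: x'_def)
        next
          case False
          then have nx: "norm x > 0" using ab by auto
          have "x - x' = (1 - b / norm x) *\<^sub>R x" using False by (simp add: x'_def algebra_simps)
          then have "norm (x - x') = \<bar>1 - b / norm x\<bar> * norm x" by simp
          also have "\<dots> = norm x - b" using nx False by (simp add: field_simps abs_if)
          finally have "dist x' x = norm x - b" by (simp add: dist_norm norm_minus_commute)
          then show ?thesis using x ab False by simp
        qed
        have "dist (h x') (h x) < e" using d(2)[of x x'] dx x nx' ab by simp
        then have "norm (h x) < norm (h x') + e" by (smt (verit) dist_commute dist_norm norm_triangle_ineq2)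
        moreover have "norm (h x') \<le> m b" by (rule upper[OF nx'])
        ultimately show "norm (h x) \<le> m b + e" by simp
      qed
    qed
  qed
  have cont: "continuous_on {0..} m"
    unfolding continuous_on_iff
  proof (intro ballI allI impI)
    fix r e :: real assume r: "r \<in> {0..}" and e: "e > 0"
    obtain d where d: "d > 0" "\<And>a b. 0 \<le> a \<Longrightarrow> 0 \<le> b \<Longrightarrow> a \<le> r + 1 \<Longrightarrow> b \<le> r + 1 \<Longrightarrow> \<bar>a - b\<bar> < d \<Longrightarrow> m a \<le> m b + e / 2"
      using key[of "e/2" "r + 1"] e by auto
    show "\<exists>d>0. \<forall>x'\<in>{0..}. dist x' r < d \<longrightarrow> dist (m x') (m r) < e"
    proof (intro exI[of _ "min d 1"] conjI ballI impI)
      show "0 < min d 1" using d by simp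
      fix x' assume x': "x' \<in> {0..}" "dist x' r < min d 1"
      then have "\<bar>x' - r\<bar> < d" "\<bar>r - x'\<bar> < d" "x' \<le> r + 1" using r by (auto simp: dist_real_def)
      then have "m x' \<le> m r + e/2" "m r \<le> m x' + e/2" using d(2) x' r by auto
      then show "dist (m x') (m r) < e" using e by (simp add: dist_real_def abs_le_iff)
    qed
  qed
  show ?thesis by (rule that[OF cont m0 mono nonneg upper]) auto
qed


lemma cont_from_bounded:
  fixes z :: "real \<Rightarrow> 'a::topological_space"
  assumes "\<And>T. continuous_on {0..T} z"
  shows "continuous_on {0..} z"
  unfolding continuous_on_eq_continuous_within
proof
  fix t :: real assume t: "t \<in> {0..}"
  have "continuous (at t within {0..t+1}) z"
    using assms[of "t+1"] t by (simp add: continuous_on_eq_continuous_within)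
  moreover have "at t within {0..} = at t within {0..t+1}"
    by (rule at_within_nhd[of _ "{..<t+1}"]) auto
  ultimately show "continuous (at t within {0..}) z" by simp
qed

theorem corollary1:
  fixes f :: "real^'n \<Rightarrow> real^'n"
    and h :: "real^'n \<Rightarrow> real^'p"
    and \<Phi> :: "real \<Rightarrow> real^'n \<Rightarrow> real^'n"
    and V :: "real^'n \<Rightarrow> real"
    and k1 k2 \<mu> \<nu> :: real
  assumes A1_sol: "\<And>x0. filippov_solution f x0 {0..} (\<lambda>t. \<Phi> t x0)"
    and A1_uniq: "\<And>x0 T z. filippov_solution f x0 {0..<T} z \<Longrightarrow> \<forall>t\<in>{0..<T}. z t = \<Phi> t x0"
    and f0: "f 0 = 0"
    and A2: "C1_map h" and h0: "h 0 = 0"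
    and A3: "\<And>x. h x \<noteq> 0 \<Longrightarrow> \<exists>e>0. \<exists>L. L-lipschitz_on (ball x e) f"
    and Lyap: "SIoGAS_Lyapunov f h V"
    and k1: "k1 > 0" and k2: "k2 > 0" and mu: "0 < \<mu>" "\<mu> < 1" and nu: "\<nu> > 1"
    and decay: "\<And>x. h x \<noteq> 0 \<Longrightarrow> lie_deriv V f x \<le> - k1 * V x powr \<mu> - k2 * V x powr \<nu>"
  shows "SIoGAS h \<Phi> \<and> OFxTS h \<Phi> \<and>
         (\<forall>x0. settling_time h \<Phi> x0 \<le> 1 / (k1 * (1 - \<mu>)) + 1 / (k2 * (\<nu> - 1)))"
proof -
  obtain \<xi>1 \<xi>2 where C1V: "C1_map V" and X1: "class_Kinf \<xi>1" and X2: "class_Kinf \<xi>2"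
    and bnd: "\<And>x. \<xi>1 (norm (h x)) \<le> V x \<and> V x \<le> \<xi>2 (norm (h x))"
    using Lyap unfolding SIoGAS_Lyapunov_def by blast
  have K1: "class_K \<xi>1" and K2: "class_K \<xi>2" using X1 X2 by (auto simp: class_Kinf_def)
  have Vdiff: "V differentiable (at x)" for x
    using C1V unfolding C1_map_def differentiable_def by blast
  have Vcont: "continuous_on UNIV V"
    using Vdiff by (simp add: continuous_at_imp_continuous_on differentiable_imp_continuous_within)
  have hcont: "continuous_on UNIV h"
    using A2 unfolding C1_map_def
    by (metis continuous_at_imp_continuous_on has_derivative_continuous)
  obtain \<eta> where Keta: "class_K \<eta>" and etab: "\<And>u y. 0 \<le> u \<Longrightarrow> 0 \<le> y \<Longrightarrow> \<xi>1 u \<le> y \<Longrightarrow> u \<le> \<eta> y"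
    using classKinf_inv[OF X1] by blast
  define K where "K r = \<eta> (\<xi>2 r)" for r
  have KK: "class_K K" unfolding K_def by (rule classK_comp[OF Keta K2])
  obtain m where mc: "continuous_on {0..} m" "m 0 = 0" "\<And>r s. 0 \<le> r \<Longrightarrow> r \<le> s \<Longrightarrow> m r \<le> m s"
    "\<And>r. 0 \<le> r \<Longrightarrow> m r \<ge> 0" "\<And>x. norm (h x) \<le> m (norm x)"
    using norm_bound_mono[OF hcont h0] by blast
  define K' where "K' r = K (m r) + r" for r
  have KK': "class_K K'" unfolding K'_def by (rule classK_plus_id[OF KK mc(1-4)])
  define Ts where "Ts = 1 / (k1 * (1 - \<mu>)) + 1 / (k2 * (\<nu> - 1))"
  have Ts: "Ts > 0"
  proof -
    have "1 / (k1 * (1 - \<mu>)) > 0" "1 / (k2 * (\<nu> - 1)) > 0" using k1 k2 mu nu by auto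
    then show ?thesis unfolding Ts_def by linarith
  qed
  define c where "c t = min 1 (exp (Ts - t))" for t
  have main: "(\<forall>t\<ge>0. V (\<Phi> t x0) \<le> V x0) \<and> (\<forall>t\<ge>Ts. h (\<Phi> t x0) = 0)" for x0
  proof -
    have sol: "filippov_solution f x0 {0..} (\<lambda>t. \<Phi> t x0)" by (rule A1_sol)
    have z0: "\<Phi> 0 x0 = x0" using sol by (simp add: filippov_solution_def)
    define W where "W t = V (\<Phi> t x0)" for t
    have zc: "continuous_on {0..} (\<lambda>t. \<Phi> t x0)"
      by (rule cont_from_bounded) (rule sol_cont[OF sol])
    have cW: "continuous_on {0..} W" unfolding W_def
      by (rule continuous_on_compose2[OF Vcont zc]) auto
    have nonneg: "W t \<ge> 0" if "t \<ge> 0" for t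
      using bnd[of "\<Phi> t x0"] classK_nonneg[OF K1, of "norm (h (\<Phi> t x0))"] by (simp add: W_def)
    have der: "\<exists>D. (W has_real_derivative D) (at t) \<and> D \<le> - k1 * W t powr \<mu> - k2 * W t powr \<nu>"
      if t: "t > 0" and Wt: "W t > 0" for t
    proof -
      have hne: "h (\<Phi> t x0) \<noteq> 0"
      proof
        assume "h (\<Phi> t x0) = 0"
        then have "V (\<Phi> t x0) \<le> 0" using bnd[of "\<Phi> t x0"] K2 by (simp add: class_K_def)
        then show False using Wt by (simp add: W_def)
      qed
      have "(W has_real_derivative lie_deriv V f (\<Phi> t x0)) (at t)"
        unfolding W_def by (rule lyap_deriv[OF sol t A3[OF hne] Vdiff])
      then show ?thesis using decay[OF hne] by (auto simp: W_def)
    qed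
    have "W t \<le> W 0" if "t \<ge> 0" for t
      by (rule W_mono_decay[OF cW nonneg der k1 k2]) (use that in auto)
    moreover have "h (\<Phi> t x0) = 0" if tT: "t \<ge> Ts" for t
    proof -
      have tT': "1 / (k1 * (1 - \<mu>)) + 1 / (k2 * (\<nu> - 1)) \<le> t" using tT unfolding Ts_def .
      have "W t = 0" by (rule W_finite[OF cW nonneg der k1 k2 mu nu tT'])
      then have "\<xi>1 (norm (h (\<Phi> t x0))) \<le> 0" using bnd[of "\<Phi> t x0"] by (simp add: W_def)
      then show ?thesis using classK_zero_iff[OF K1] by simp
    qed
    ultimately show ?thesis using z0 by (simp add: W_def)
  qed
  have cpos: "c t > 0" for t by (simp add: c_def)
  have c1: "c t = 1" if "t < Ts" for t using that by (simp add: c_def)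
  have gen: "norm (h (\<Phi> t x0)) \<le> K (norm (h x0)) * c t" if t: "t \<ge> 0" for t x0
  proof (cases "t < Ts")
    case True
    have "\<xi>1 (norm (h (\<Phi> t x0))) \<le> \<xi>2 (norm (h x0))"
      using bnd[of "\<Phi> t x0"] bnd[of x0] main[of x0] t by fastforce
    then have "norm (h (\<Phi> t x0)) \<le> K (norm (h x0))"
      unfolding K_def by (rule etab[OF norm_ge_zero classK_nonneg[OF K2 norm_ge_zero]])
    then show ?thesis using c1[OF True] by simp
  next
    case False
    then have "h (\<Phi> t x0) = 0" using main[of x0] by simp
    then show ?thesis using classK_nonneg[OF KK norm_ge_zero, of "h x0"] cpos[of t] by simp
  qed
  have KL: "class_KL (\<lambda>r t. K r * c t)" unfolding c_def by (rule classKL_prod[OF KK Ts])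
  have KL': "class_KL (\<lambda>r t. K' r * c t)" unfolding c_def by (rule classKL_prod[OF KK' Ts])
  have S: "SIoGAS h \<Phi>" unfolding SIoGAS_def using KL gen by blast
  have O: "oGAS h \<Phi>" unfolding oGAS_def
  proof (intro exI[of _ "\<lambda>r t. K' r * c t"] conjI KL' allI impI)
    fix t :: real and x0 assume t: "t \<ge> 0"
    have "K (norm (h x0)) \<le> K (m (norm x0))"
      by (rule classK_mono[OF KK norm_ge_zero mc(5)])
    also have "\<dots> \<le> K' (norm x0)" by (simp add: K'_def)
    finally have "K (norm (h x0)) * c t \<le> K' (norm x0) * c t"
      using cpos[of t] by (intro mult_right_mono) (auto simp: less_imp_le)
    then show "norm (h (\<Phi> t x0)) \<le> K' (norm x0) * c t" using gen[OF t, of x0] by simp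
  qed
  have st: "settling_time h \<Phi> x0 \<le> Ts" for x0
    unfolding settling_time_def
    by (rule cInf_lower) (use main[of x0] Ts in \<open>auto intro: bdd_belowI[of _ 0]\<close>)
  have "OFTS h \<Phi>" unfolding OFTS_def
    using O main Ts by (auto intro!: exI[of _ Ts])
  moreover have "bdd_above (range (settling_time h \<Phi>))" using st by (auto intro: bdd_aboveI[of _ Ts])
  ultimately show ?thesis using S st by (simp add: OFxTS_def Ts_def)
qed

end
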